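(* Let $K,D,U$ be integers with $0\le U\le D$ and $U+D\le K-2$, and suppose $\gcd(K,D-U,U+1)=\gcd(K-D+U,U+1)$. Consider the two-sided single unicast index coding problem with $K$ messages and $K$ receivers, receiver $R_k$ wanting $x_k$ and having side-information $\{x_{k-U},\dots,x_{k-1}\}\cup\{x_{k+1},\dots,x_{k+D}\}$ (indices modulo $K$). Let $u_a=\frac{U+1}{\gcd(K,D-U,U+1)}$. Then no $p$-dimensional vector linear index code with $1\le p<u_a$ for this problem is of optimal length; i.e., the $u_a$-dimensional optimal length vector linear index codes for this problem are of minimal dimension.
   Context: A $p$-dimensional vector linear index code of length $N$ encodes the $pK$ message symbols (each $x_k\in\mathbb{F}_q^p$) linearly into $N$ broadcast symbols from which each receiver decodes its wanted message using its side-information; its rate is $p/N$. For this problem (with $U+D\le K-2$) the symmetric capacity is $\frac{U+1}{K-D+U}$, and a code is of optimal length if its rate equals the capacity. *)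

theory Defs
  imports Complex_Main
begin

text \<open>Messages and receivers are indexed by 0..K-1. Receiver k wants x_k and knows
  x_{k-U},...,x_{k-1} and x_{k+1},...,x_{k+D} (indices modulo K).\<close>

definition side_info :: "nat \<Rightarrow> nat \<Rightarrow> nat \<Rightarrow> nat \<Rightarrow> nat set" where
  "side_info K D U k =
     {(k + K - j) mod K | j. 1 \<le> j \<and> j \<le> U} \<union> {(k + j) mod K | j. 1 \<le> j \<and> j \<le> D}"

text \<open>A p-dimensional vector linear index code of length N is given by an encoding
  matrix L of size N x pK over the field: the n-th broadcast symbol is
  sum over k<K, i<p of L n (k,i) * x k i, where x k i is the i-th component of
  message x_k in F^p.\<close>

definition encode :: "nat \<Rightarrow> nat \<Rightarrow> (nat \<Rightarrow> nat \<times> nat \<Rightarrow> 'a::field) \<Rightarrow> (nat \<Rightarrow> nat \<Rightarrow> 'a) \<Rightarrow> nat \<Rightarrow> 'a" where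
  "encode K p L x n = (\<Sum>k<K. \<Sum>i<p. L n (k, i) * x k i)"

definition valid_vlic ::
  "nat \<Rightarrow> nat \<Rightarrow> nat \<Rightarrow> nat \<Rightarrow> nat \<Rightarrow> (nat \<Rightarrow> nat \<times> nat \<Rightarrow> 'a::field) \<Rightarrow> bool" where
  "valid_vlic K D U p N L \<longleftrightarrow>
     (\<forall>k<K. \<forall>x x' :: nat \<Rightarrow> nat \<Rightarrow> 'a.
        (\<forall>n<N. encode K p L x n = encode K p L x' n) \<and>
        (\<forall>j\<in>side_info K D U k. \<forall>i<p. x j i = x' j i)
        \<longrightarrow> (\<forall>i<p. x k i = x' k i))"

definition sym_capacity :: "nat \<Rightarrow> nat \<Rightarrow> nat \<Rightarrow> real" where
  "sym_capacity K D U = real (U + 1) / real (K - D + U)"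

definition optimal_length_vlic ::
  "nat \<Rightarrow> nat \<Rightarrow> nat \<Rightarrow> nat \<Rightarrow> nat \<Rightarrow> (nat \<Rightarrow> nat \<times> nat \<Rightarrow> 'a::field) \<Rightarrow> bool" where
  "optimal_length_vlic K D U p N L \<longleftrightarrow>
     valid_vlic K D U p N L \<and> real p / real N = sym_capacity K D U"

end

theory Submission
  imports Defs
begin

lemma arith_core:
  fixes M u p N :: nat
  assumes "M > 0" "p \<ge> 1" "p * M = N * u" "u > 0"
  shows "u div gcd M u \<le> p"
proof -
  define g where "g = gcd M u"
  have gpos: "g > 0" using assms g_def by simp
  obtain a where a: "u = a * g" using g_def by (metis dvd_def gcd_dvd2 mult.commute)
  obtain b where b: "M = b * g" using g_def by (metis dvd_def gcd_dvd1 mult.commute)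
  have cop: "coprime a b"
  proof -
    have "gcd M u = g * gcd b a" using a b by (simp add: gcd_mult_right mult.commute gcd.commute)
    then have "gcd b a = 1" using g_def gpos assms(1) by simp
    then show ?thesis by (simp add: coprime_iff_gcd_eq_1 gcd.commute)
  qed
  have "p * b * g = N * a * g" using assms(3) a b by (simp add: mult.assoc)
  then have "p * b = N * a" using gpos by simp
  then have "a dvd p * b" by (metis dvd_triv_right)
  then have "a dvd p" using cop by (simp add: coprime_dvd_mult_left_iff)
  then have "a \<le> p" using assms(2) by (simp add: dvd_imp_le)
  moreover have "u div g = a" using a gpos by simp
  ultimately show ?thesis using g_def by simp
qed

theorem lemma1:
  fixes K D U p N :: nat
    and L :: "nat \<Rightarrow> nat \<times> nat \<Rightarrow> 'a::{field, finite}"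
  assumes "U \<le> D" and "U + D + 2 \<le> K"
    and "gcd K (gcd (D - U) (U + 1)) = gcd (K - D + U) (U + 1)"
    and "1 \<le> p" and "p < (U + 1) div gcd K (gcd (D - U) (U + 1))"
  shows "\<not> optimal_length_vlic K D U p N L"
proof
  assume "optimal_length_vlic K D U p N L"
  then have eq: "real p / real N = real (U + 1) / real (K - D + U)"
    by (simp add: optimal_length_vlic_def sym_capacity_def)
  define M where "M = K - D + U"
  have Mpos: "M > 0" using assms M_def by simp
  have "N \<noteq> 0"
  proof
    assume "N = 0"
    then have "real (U + 1) / real M = 0" using eq M_def by simp
    then show False using Mpos by simp
  qed
  then have "real p * real M = real N * real (U + 1)"
    using eq Mpos M_def by (simp add: field_simps)
  then have "p * M = N * (U + 1)" by (metis of_nat_eq_iff of_nat_mult)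
  then have "(U + 1) div gcd M (U + 1) \<le> p"
    using arith_core[OF Mpos assms(4)] by simp
  then show False using assms(3,5) M_def by simp
qed

end
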